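(* Let $K$ be a field of characteristic $0$, let $a\in K^*$ be a nonzero constant and let $P_t(x)\in K[t,x]$ be a polynomial of degree $4$ in $x$ and of even degree $d$ in $t$. Let $V\to\mathbb{P}^1\times\mathbb{P}^1$ be the associated Châtelet surface bundle (conic bundle) and $\mathrm{De}(V)\subset\mathbb{P}^1\times\mathbb{P}^1$ its degeneracy locus. Then the projective variety $V$ is smooth over $K$ if and only if $\mathrm{De}(V)$ is a smooth curve.
   Context: Let $\tilde P_{t,t'}(x,x')=x'^4t'^dP_{t/t'}(x/x')\in K[t,t',x,x']$ be the bihomogenisation of $P_t(x)$, and set $P^{\infty\infty}_t(x)=\tilde P_{t,1}(x,1)$, $P^{\infty0}_t(x')=\tilde P_{t,1}(1,x')$, $P^{0\infty}_{t'}(x)=\tilde P_{1,t'}(x,1)$, $P^{00}_{t'}(x')=\tilde P_{1,t'}(1,x')$. Cover $\mathbb{P}^1\times\mathbb{P}^1$ (coordinates $t$ or $t'=1/t$ on the first factor, $x$ or $x'=1/x$ on the second) by the four affine opens $\mathcal{U}_{\infty\infty},\mathcal{U}_{\infty0},\mathcal{U}_{0\infty},\mathcal{U}_{00}$ (complements of $\infty$ or $0$ in each factor). $V$ is obtained by gluing the hypersurfaces $Y^2-aZ^2=W_{\infty\infty}^2P^{\infty\infty}_t(x)$, $Y^2-aZ^2=W_{\infty0}^2P^{\infty0}_t(x')$, $Y^2-aZ^2=W_{0\infty}^2P^{0\infty}_{t'}(x)$, $Y^2-aZ^2=W_{00}^2P^{00}_{t'}(x')$ in $\mathcal{U}_{\bullet\bullet}\times\mathbb{P}^2$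 (coordinates $(Y:Z:W_{\bullet\bullet})$) via $t'=t^{-1}$, $x'=x^{-1}$, $W_{\infty\infty}=W_{\infty0}x'^2=W_{0\infty}t'^{d/2}=W_{00}x'^2t'^{d/2}$, $W_{\infty0}=W_{0\infty}x^2t'^{d/2}=W_{00}t'^{d/2}$, $W_{0\infty}=W_{00}x'^2$. It maps to $\mathbb{P}^1\times\mathbb{P}^1$, and composing with the first projection gives the Châtelet surface bundle $V\to\mathbb{P}^1$ with fibres $y^2-az^2=P_\theta(x)$. The degeneracy locus $\mathrm{De}(V)$ is the curve $\tilde P_{t,t'}(x,x')=0$ in $\mathbb{P}^1\times\mathbb{P}^1$. *)

theory Defs
  imports "HOL-Computational_Algebra.Polynomial"
begin

text \<open>A polynomial P_t(x) in K[t,x] with deg_x P = 4 and deg_t P = d is given by its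
coefficient function c, where c i j is the coefficient of t^i x^j.
The four affine charts of P1 x P1 are indexed by two booleans (ft, fx):
ft = False means the chart with coordinate t (complement of infinity), ft = True the chart
with coordinate t' = 1/t; similarly fx for x resp. x' = 1/x.
In chart (ft, fx) the (dehomogenised) polynomial is obtained from the bihomogenisation
x'^4 t'^d P_{t/t'}(x/x') by setting the appropriate coordinate to 1.\<close>

definition expo :: "nat \<Rightarrow> bool \<Rightarrow> nat \<Rightarrow> nat" where
  "expo n flip i = (if flip then n - i else i)"

definition chart_poly :: "(nat \<Rightarrow> nat \<Rightarrow> 'a::comm_ring_1) \<Rightarrow> nat \<Rightarrow> bool \<Rightarrow> bool \<Rightarrow> 'a \<Rightarrow> 'a \<Rightarrow> 'a" where
  "chart_poly c d ft fx u v =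
     (\<Sum>i\<le>d. \<Sum>j\<le>4. c i j * u ^ expo d ft i * v ^ expo 4 fx j)"

definition chart_poly_du :: "(nat \<Rightarrow> nat \<Rightarrow> 'a::comm_ring_1) \<Rightarrow> nat \<Rightarrow> bool \<Rightarrow> bool \<Rightarrow> 'a \<Rightarrow> 'a \<Rightarrow> 'a" where
  "chart_poly_du c d ft fx u v =
     (\<Sum>i\<le>d. \<Sum>j\<le>4. c i j * of_nat (expo d ft i) * u ^ (expo d ft i - 1) * v ^ expo 4 fx j)"

definition chart_poly_dv :: "(nat \<Rightarrow> nat \<Rightarrow> 'a::comm_ring_1) \<Rightarrow> nat \<Rightarrow> bool \<Rightarrow> bool \<Rightarrow> 'a \<Rightarrow> 'a \<Rightarrow> 'a" where
  "chart_poly_dv c d ft fx u v =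
     (\<Sum>i\<le>d. \<Sum>j\<le>4. c i j * u ^ expo d ft i * of_nat (expo 4 fx j) * v ^ (expo 4 fx j - 1))"

text \<open>The degeneracy locus De(V): the curve tilde P = 0 in P1 x P1, read over an
algebraically closed field L.\<close>
definition De_smooth :: "(nat \<Rightarrow> nat \<Rightarrow> 'a::comm_ring_1) \<Rightarrow> nat \<Rightarrow> bool" where
  "De_smooth c d = (\<forall>ft fx u v.
      \<not> (chart_poly c d ft fx u v = 0 \<and> chart_poly_du c d ft fx u v = 0
          \<and> chart_poly_dv c d ft fx u v = 0))"

text \<open>The Chatelet surface bundle V, covered by the four hypersurfaces
F = Y^2 - a Z^2 - W^2 P^{..}(u,v) = 0 in (chart of P1 x P1) x P2, coordinates (Y:Z:W).\<close>
definition V_smooth :: "'a::comm_ring_1 \<Rightarrow> (nat \<Rightarrow> nat \<Rightarrow> 'a) \<Rightarrow> nat \<Rightarrow> bool" where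
  "V_smooth a c d = (\<forall>ft fx u v Y Z W. (Y, Z, W) \<noteq> (0, 0, 0) \<longrightarrow>
      \<not> (Y^2 - a * Z^2 - W^2 * chart_poly c d ft fx u v = 0
         \<and> 2 * Y = 0
         \<and> - 2 * a * Z = 0
         \<and> - 2 * W * chart_poly c d ft fx u v = 0
         \<and> - (W^2 * chart_poly_du c d ft fx u v) = 0
         \<and> - (W^2 * chart_poly_dv c d ft fx u v) = 0))"

end

theory Submission
  imports Defs
begin

theorem lemma2p1:
  fixes \<phi> :: "'k::field_char_0 \<Rightarrow> 'l::alg_closed_field"
    and a :: 'k and c :: "nat \<Rightarrow> nat \<Rightarrow> 'k" and d :: nat
  assumes hom_add: "\<And>x y. \<phi> (x + y) = \<phi> x + \<phi> y"
    and hom_mult: "\<And>x y. \<phi> (x * y) = \<phi> x * \<phi> y"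
    and hom_one: "\<phi> 1 = 1"
    and a_nz: "a \<noteq> 0"
    and supp: "\<And>i j. c i j \<noteq> 0 \<Longrightarrow> i \<le> d \<and> j \<le> 4"
    and deg_x: "\<exists>i. c i 4 \<noteq> 0"
    and deg_t: "\<exists>j. c d j \<noteq> 0"
    and d_even: "even d"
  shows "V_smooth (\<phi> a) (\<lambda>i j. \<phi> (c i j)) d \<longleftrightarrow> De_smooth (\<lambda>i j. \<phi> (c i j)) d"
proof -
  have nz: "\<phi> x \<noteq> 0" if "x \<noteq> 0" for x
  proof
    assume "\<phi> x = 0"
    have "\<phi> (x * inverse x) = \<phi> x * \<phi> (inverse x)" by (rule hom_mult)
    then have "\<phi> 1 = 0" using that \<open>\<phi> x = 0\<close> by simp
    then show False using hom_one by simp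
  qed
  have an: "\<phi> a \<noteq> 0" using nz a_nz by blast
  have "\<phi> 2 = 2"
  proof -
    have "(2::'k) = 1 + 1" by simp
    then have "\<phi> 2 = \<phi> 1 + \<phi> 1" using hom_add[of 1 1] by metis
    then show ?thesis using hom_one by simp
  qed
  then have two: "(2::'l) \<noteq> 0" using nz[of 2] by simp
  let ?c = "\<lambda>i j. \<phi> (c i j)"
  show ?thesis
  proof
    assume V: "V_smooth (\<phi> a) ?c d"
    show "De_smooth ?c d" unfolding De_smooth_def
    proof (intro allI notI)
      fix ft fx u v
      assume h: "chart_poly ?c d ft fx u v = 0 \<and> chart_poly_du ?c d ft fx u v = 0 \<and> chart_poly_dv ?c d ft fx u v = 0"
      have "\<not> ((0::'l)^2 - \<phi> a * 0^2 - 1^2 * chart_poly ?c d ft fx u v = 0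
         \<and> 2 * (0::'l) = 0 \<and> - 2 * \<phi> a * 0 = 0 \<and> - 2 * 1 * chart_poly ?c d ft fx u v = 0
         \<and> - (1^2 * chart_poly_du ?c d ft fx u v) = 0 \<and> - (1^2 * chart_poly_dv ?c d ft fx u v) = 0)"
        using V[unfolded V_smooth_def, THEN spec[where x=ft], THEN spec[where x=fx], THEN spec[where x=u], THEN spec[where x=v], THEN spec[where x=0], THEN spec[where x=0], THEN spec[where x=1]] by simp
      then show False using h by simp
    qed
  next
    assume D: "De_smooth ?c d"
    show "V_smooth (\<phi> a) ?c d" unfolding V_smooth_def
    proof (intro allI impI notI)
      fix ft fx u v Y Z W
      assume ne: "(Y, Z, W) \<noteq> (0::'l, 0::'l, 0::'l)"
      assume h: "Y\<^sup>2 - \<phi> a * Z\<^sup>2 - W\<^sup>2 * chart_poly ?c d ft fx u v = 0 \<and>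
        2 * Y = 0 \<and> - 2 * \<phi> a * Z = 0 \<and> - 2 * W * chart_poly ?c d ft fx u v = 0 \<and>
        - (W\<^sup>2 * chart_poly_du ?c d ft fx u v) = 0 \<and> - (W\<^sup>2 * chart_poly_dv ?c d ft fx u v) = 0"
      have Y: "Y = 0" using h two by simp
      have Z: "Z = 0" using h two an by simp
      have W: "W \<noteq> 0" using ne Y Z by simp
      have "chart_poly ?c d ft fx u v = 0" using h Y Z W by simp
      moreover have "chart_poly_du ?c d ft fx u v = 0" using h W by simp
      moreover have "chart_poly_dv ?c d ft fx u v = 0" using h W by simp
      ultimately show False using D unfolding De_smooth_def by blast
    qed
  qed
qed

end
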